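(* Let $\mathcal{E}=G_2([-1,1])$ be the set of the $256$ global maps of elementary cellular automata. Under the equivalence relation $\sim$ (generated by state permutation, reflection, shift and scaling, as defined in the context) restricted to $\mathcal{E}$, the set $\mathcal{E}$ splits into exactly $81$ equivalence classes.
   Context: For finite $M=\{j_1<\dots<j_m\}\subset\mathbb{Z}$ and $f:\{0,1\}^m\to\{0,1\}$, $\Phi^M_f(x)_i=f(x_{i+j_1}\dots x_{i+j_m})$ on $\{0,1\}^{\mathbb{Z}}$; $G_2([-1,1])=\{\Phi^{\{-1,0,1\}}_f\mid f:\{0,1\}^3\to\{0,1\}\}$. Operators on global maps: $\sigma\Phi=\sigma\circ\Phi$ with $(\sigma x)_i=x_{i+1}$; $\hat c\Phi(x)=c\Phi(cx)$ where $c$ swaps $0$ and $1$ in every cell; $\hat r\Phi(x)=r\Phi(rx)$ with $(rx)_i=x_{-i}$. $\Phi\cong\Psi$ iff $\Psi=\tau\Phi$ for some $\tau$ in the group generated by $\sigma,\hat r,\hat c$. Scaling: for a positive rational $v$ and a global map with a representation $\Phi=\Phi^M_f$ where $vM=\{vi\mid i\in M\}\subseteq\mathbb{Z}$, $\hat s_v\Phi=\Phi^{vM}_f$. $\Phi\sim\Psi$ iff there are global maps $\Phi',\Psi'$ and a positive rational $v$ with $\Phi\cong\Phi'$, $\Psi\cong\Psi'$ and $\Psi'=\hat s_v\Phi'$. *)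

theory Defs
  imports Complex_Main
begin

text \<open>Configurations in {0,1}^Z, with bool standing for {0,1} (False = 0, True = 1).\<close>
type_synonym cfg = "int \<Rightarrow> bool"
type_synonym gmap = "cfg \<Rightarrow> cfg"

definition Phi :: "int set \<Rightarrow> (bool list \<Rightarrow> bool) \<Rightarrow> gmap" where
  "Phi M f = (\<lambda>x i. f (map (\<lambda>j. x (i + j)) (sorted_list_of_set M)))"

definition is_rep :: "int set \<Rightarrow> (bool list \<Rightarrow> bool) \<Rightarrow> gmap \<Rightarrow> bool" where
  "is_rep M f \<Phi> \<longleftrightarrow> finite M \<and> \<Phi> = Phi M f"

definition ECA :: "gmap set" where
  "ECA = {Phi {-1, 0, 1} f | f. True}"

definition shift :: "cfg \<Rightarrow> cfg" where "shift x = (\<lambda>i. x (i + 1))"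
definition shift_inv :: "cfg \<Rightarrow> cfg" where "shift_inv x = (\<lambda>i. x (i - 1))"
definition cswap :: "cfg \<Rightarrow> cfg" where "cswap x = (\<lambda>i. \<not> x i)"
definition refl_cfg :: "cfg \<Rightarrow> cfg" where "refl_cfg x = (\<lambda>i. x (- i))"

definition op_sigma :: "gmap \<Rightarrow> gmap" where "op_sigma \<Phi> = shift \<circ> \<Phi>"
definition op_sigma_inv :: "gmap \<Rightarrow> gmap" where "op_sigma_inv \<Phi> = shift_inv \<circ> \<Phi>"
definition op_c :: "gmap \<Rightarrow> gmap" where "op_c \<Phi> = (\<lambda>x. cswap (\<Phi> (cswap x)))"
definition op_r :: "gmap \<Rightarrow> gmap" where "op_r \<Phi> = (\<lambda>x. refl_cfg (\<Phi> (refl_cfg x)))"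

text \<open>Phi \<cong> Psi iff Psi = tau Phi for tau in the group generated by sigma, r-hat, c-hat
  (r-hat and c-hat are involutions; sigma^{-1} is op_sigma_inv).\<close>
inductive sym_equiv :: "gmap \<Rightarrow> gmap \<Rightarrow> bool" where
  base: "sym_equiv \<Phi> \<Phi>"
| sigma: "sym_equiv \<Phi> \<Psi> \<Longrightarrow> sym_equiv \<Phi> (op_sigma \<Psi>)"
| sigma_inv: "sym_equiv \<Phi> \<Psi> \<Longrightarrow> sym_equiv \<Phi> (op_sigma_inv \<Psi>)"
| c: "sym_equiv \<Phi> \<Psi> \<Longrightarrow> sym_equiv \<Phi> (op_c \<Psi>)"
| r: "sym_equiv \<Phi> \<Psi> \<Longrightarrow> sym_equiv \<Phi> (op_r \<Psi>)"

text \<open>vM = {v*i | i in M} as a set of integers (meaningful when vM \<subseteq> Z).\<close>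
definition scale_set :: "rat \<Rightarrow> int set \<Rightarrow> int set" where
  "scale_set v M = {k. \<exists>j\<in>M. of_int k = v * of_int j}"

definition is_scaling :: "rat \<Rightarrow> gmap \<Rightarrow> gmap \<Rightarrow> bool" where
  "is_scaling v \<Phi> \<Psi> \<longleftrightarrow> 0 < v \<and>
     (\<exists>M f. is_rep M f \<Phi> \<and> (\<forall>j\<in>M. v * of_int j \<in> \<int>) \<and> \<Psi> = Phi (scale_set v M) f)"

definition sim :: "gmap \<Rightarrow> gmap \<Rightarrow> bool" where
  "sim \<Phi> \<Psi> \<longleftrightarrow> (\<exists>\<Phi>' \<Psi>' v. sym_equiv \<Phi> \<Phi>' \<and> sym_equiv \<Psi> \<Psi>' \<and> is_scaling v \<Phi>' \<Psi>')"

end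

theory Submission
  imports Defs
begin


definition ap :: "(bool \<Rightarrow> bool \<Rightarrow> bool \<Rightarrow> bool) \<Rightarrow> (nat \<Rightarrow> bool) \<Rightarrow> bool" where
  "ap F p = F (p 0) (p 1) (p 2)"
definition trip :: "bool \<Rightarrow> bool \<Rightarrow> bool \<Rightarrow> nat \<Rightarrow> bool" where
  "trip a b c = (\<lambda>i. if i = 0 then a else if i = 1 then b else c)"
definition dep3 :: "(bool \<Rightarrow> bool \<Rightarrow> bool \<Rightarrow> bool) \<Rightarrow> nat \<Rightarrow> bool" where
  "dep3 F i = (\<exists>a b c. ap F (trip a b c) \<noteq> ap F ((trip a b c)(i := \<not> trip a b c i)))"
definition EFL :: "(bool \<Rightarrow> bool \<Rightarrow> bool \<Rightarrow> bool) \<Rightarrow> nat list" where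
  "EFL F = (if dep3 F 0 then [0] else []) @ (if dep3 F 1 then [1] else []) @ (if dep3 F 2 then [2] else [])"
definition plL :: "nat list \<Rightarrow> (nat \<Rightarrow> bool) \<Rightarrow> nat \<Rightarrow> bool" where
  "plL L p i = (i \<in> set L \<and> p (length (filter (\<lambda>j. j < i) L)))"
definition enc3 :: "bool \<Rightarrow> bool \<Rightarrow> bool \<Rightarrow> bool \<Rightarrow> bool \<Rightarrow> bool \<Rightarrow> bool \<Rightarrow> bool \<Rightarrow> nat" where
  "enc3 t0 t1 t2 t3 t4 t5 t6 t7 = of_bool t0 + 2 * (of_bool t1 + 2 * (of_bool t2 + 2 * (of_bool t3 +
     2 * (of_bool t4 + 2 * (of_bool t5 + 2 * (of_bool t6 + 2 * of_bool t7))))))"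
definition tabv where "tabv F L a b c = ap F (plL L (trip a b c))"
definition invN :: "(bool \<Rightarrow> bool \<Rightarrow> bool \<Rightarrow> bool) \<Rightarrow> nat" where
  "invN F = length (EFL F) + 4 * enc3 (tabv F (EFL F) False False False) (tabv F (EFL F) False False True)
     (tabv F (EFL F) False True False) (tabv F (EFL F) False True True)
     (tabv F (EFL F) True False False) (tabv F (EFL F) True False True)
     (tabv F (EFL F) True True False) (tabv F (EFL F) True True True)"
definition cT :: "(bool \<Rightarrow> bool \<Rightarrow> bool \<Rightarrow> bool) \<Rightarrow> (bool \<Rightarrow> bool \<Rightarrow> bool \<Rightarrow> bool)" where
  "cT F = (\<lambda>x y z. \<not> F (\<not> x) (\<not> y) (\<not> z))"
definition rT :: "(bool \<Rightarrow> bool \<Rightarrow> bool \<Rightarrow> bool) \<Rightarrow> (bool \<Rightarrow> bool \<Rightarrow> bool \<Rightarrow> bool)" where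
  "rT F = (\<lambda>x y z. F z y x)"
definition tr :: "bool \<Rightarrow> bool \<Rightarrow> (bool \<Rightarrow> bool \<Rightarrow> bool \<Rightarrow> bool) \<Rightarrow> (bool \<Rightarrow> bool \<Rightarrow> bool \<Rightarrow> bool)" where
  "tr a b F = (if a then cT else id) ((if b then rT else id) F)"
definition K :: "(bool \<Rightarrow> bool \<Rightarrow> bool \<Rightarrow> bool) \<Rightarrow> nat" where
  "K F = min (min (invN F) (invN (cT F))) (min (invN (rT F)) (invN (cT (rT F))))"
definition R8 :: "bool \<Rightarrow> bool \<Rightarrow> bool \<Rightarrow> bool \<Rightarrow> bool \<Rightarrow> bool \<Rightarrow> bool \<Rightarrow> bool \<Rightarrow> bool \<Rightarrow> bool \<Rightarrow> bool \<Rightarrow> bool" where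
  "R8 t0 t1 t2 t3 t4 t5 t6 t7 a b c = (if a then (if b then (if c then t7 else t6) else (if c then t5 else t4))
       else (if b then (if c then t3 else t2) else (if c then t1 else t0)))"
definition R8L :: "bool list \<Rightarrow> bool \<Rightarrow> bool \<Rightarrow> bool \<Rightarrow> bool" where
  "R8L tb = R8 (tb!0) (tb!1) (tb!2) (tb!3) (tb!4) (tb!5) (tb!6) (tb!7)"
definition BL :: "bool list" where "BL = [False, True]"
fun allbs :: "nat \<Rightarrow> bool list list" where
  "allbs 0 = [[]]"
| "allbs (Suc n) = concat (map (\<lambda>b. map (Cons b) (allbs n)) BL)"
definition all8 :: "bool list list" where "all8 = allbs 8"

lemma dep0: "dep3 (R8 t0 t1 t2 t3 t4 t5 t6 t7) 0 = (t0 \<noteq> t4 \<or> t1 \<noteq> t5 \<or> t2 \<noteq> t6 \<or> t3 \<noteq> t7)"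
  by (simp add: dep3_def ap_def trip_def R8_def ex_bool_eq, blast)
lemma dep1: "dep3 (R8 t0 t1 t2 t3 t4 t5 t6 t7) 1 = (t0 \<noteq> t2 \<or> t1 \<noteq> t3 \<or> t4 \<noteq> t6 \<or> t5 \<noteq> t7)"
  by (simp add: dep3_def ap_def trip_def R8_def ex_bool_eq, blast)
lemma dep2: "dep3 (R8 t0 t1 t2 t3 t4 t5 t6 t7) 2 = (t0 \<noteq> t1 \<or> t2 \<noteq> t3 \<or> t4 \<noteq> t5 \<or> t6 \<noteq> t7)"
  by (simp add: dep3_def ap_def trip_def R8_def ex_bool_eq, blast)
lemma cT8: "cT (R8 t0 t1 t2 t3 t4 t5 t6 t7) = R8 (\<not>t7) (\<not>t6) (\<not>t5) (\<not>t4) (\<not>t3) (\<not>t2) (\<not>t1) (\<not>t0)"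
  by (auto simp: cT_def R8_def fun_eq_iff)
lemma rT8: "rT (R8 t0 t1 t2 t3 t4 t5 t6 t7) = R8 t0 t4 t2 t6 t1 t5 t3 t7"
  by (auto simp: rT_def R8_def fun_eq_iff)

lemma invN_R8: "invN (R8 t0 t1 t2 t3 t4 t5 t6 t7) =
  (let d0 = (t0 \<noteq> t4 \<or> t1 \<noteq> t5 \<or> t2 \<noteq> t6 \<or> t3 \<noteq> t7);
       d1 = (t0 \<noteq> t2 \<or> t1 \<noteq> t3 \<or> t4 \<noteq> t6 \<or> t5 \<noteq> t7);
       d2 = (t0 \<noteq> t1 \<or> t2 \<noteq> t3 \<or> t4 \<noteq> t5 \<or> t6 \<noteq> t7) in
   if d0 then if d1 then if d2 then 3 + 4 * enc3 t0 t1 t2 t3 t4 t5 t6 t7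
                                else 2 + 4 * enc3 t0 t0 t2 t2 t4 t4 t6 t6
                    else if d2 then 2 + 4 * enc3 t0 t0 t1 t1 t4 t4 t5 t5
                                else 1 + 4 * enc3 t0 t0 t0 t0 t4 t4 t4 t4
   else if d1 then if d2 then 2 + 4 * enc3 t0 t0 t1 t1 t2 t2 t3 t3
                         else 1 + 4 * enc3 t0 t0 t0 t0 t2 t2 t2 t2
   else if d2 then 1 + 4 * enc3 t0 t0 t0 t0 t1 t1 t1 t1
   else 4 * enc3 t0 t0 t0 t0 t0 t0 t0 t0)"
proof -
  have e: "EFL (R8 t0 t1 t2 t3 t4 t5 t6 t7) = (if (t0 \<noteq> t4 \<or> t1 \<noteq> t5 \<or> t2 \<noteq> t6 \<or> t3 \<noteq> t7) then [0] else []) @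
     (if (t0 \<noteq> t2 \<or> t1 \<noteq> t3 \<or> t4 \<noteq> t6 \<or> t5 \<noteq> t7) then [1] else []) @
     (if (t0 \<noteq> t1 \<or> t2 \<noteq> t3 \<or> t4 \<noteq> t5 \<or> t6 \<noteq> t7) then [2] else [])"
    by (simp only: EFL_def dep0 dep1 dep2)
  show ?thesis
    unfolding invN_def e Let_def
    apply (cases "t0 \<noteq> t4 \<or> t1 \<noteq> t5 \<or> t2 \<noteq> t6 \<or> t3 \<noteq> t7";
           cases "t0 \<noteq> t2 \<or> t1 \<noteq> t3 \<or> t4 \<noteq> t6 \<or> t5 \<noteq> t7";
           cases "t0 \<noteq> t1 \<or> t2 \<noteq> t3 \<or> t4 \<noteq> t5 \<or> t6 \<noteq> t7")
    apply (simp_all only: if_True if_False append.simps)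
    apply (simp_all add: tabv_def plL_def ap_def trip_def R8_def)
    done
qed

lemma R8L_simp: "R8L [t0,t1,t2,t3,t4,t5,t6,t7] = R8 t0 t1 t2 t3 t4 t5 t6 t7"
  by (simp add: R8L_def)

lemma all8_unf: "all8 = allbs (Suc (Suc (Suc (Suc (Suc (Suc (Suc (Suc 0))))))))"
  by (simp add: all8_def numeral_eq_Suc)

lemma count81: "length (remdups (map (\<lambda>tb. K (R8L tb)) all8)) = 81"
  unfolding all8_unf
  apply (simp only: allbs.simps BL_def list.map concat.simps append.simps)
  apply (simp add: K_def invN_R8 cT8 rT8 enc3_def Let_def R8L_simp)
  done

lemma set_allbs: "set (allbs n) = {tb. length tb = n}"
proof (induction n)
  case 0 then show ?case by auto
next
  case (Suc n)
  show ?case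
  proof (rule set_eqI)
    fix tb :: "bool list"
    show "tb \<in> set (allbs (Suc n)) \<longleftrightarrow> tb \<in> {tb. length tb = Suc n}"
      using Suc by (cases tb) (auto simp: BL_def)
  qed
qed

lemma set_all8: "set all8 = {tb. length tb = 8}"
  by (simp add: all8_def set_allbs)



definition EF :: "(bool \<Rightarrow> bool \<Rightarrow> bool \<Rightarrow> bool) \<Rightarrow> nat set" where
  "EF F = {i. i < 3 \<and> dep3 F i}"
definition pl :: "nat set \<Rightarrow> (nat \<Rightarrow> bool) \<Rightarrow> nat \<Rightarrow> bool" where
  "pl E p i = (i \<in> E \<and> p (card {j\<in>E. j < i}))"

lemma ap_cong: "(\<And>i. i < 3 \<Longrightarrow> p i = q i) \<Longrightarrow> ap F p = ap F q"
  by (simp add: ap_def)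

lemma lt3: "(i::nat) < 3 \<Longrightarrow> i = 0 \<or> i = 1 \<or> i = 2"
  by arith

lemma trip_eq: "i < 3 \<Longrightarrow> trip (p 0) (p 1) (p 2) i = p i"
  using lt3[of i] by (auto simp: trip_def)

lemma dep3_iff: "dep3 F i \<longleftrightarrow> (\<exists>p. ap F p \<noteq> ap F (p(i := \<not> p i)))"
proof
  assume "dep3 F i" then show "\<exists>p. ap F p \<noteq> ap F (p(i := \<not> p i))"
    unfolding dep3_def by blast
next
  assume "\<exists>p. ap F p \<noteq> ap F (p(i := \<not> p i))"
  then obtain p where p: "ap F p \<noteq> ap F (p(i := \<not> p i))" by blast
  define t where "t = trip (p 0) (p 1) (p 2)"
  have te: "\<And>k. k < 3 \<Longrightarrow> t k = p k" unfolding t_def by (rule trip_eq)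
  have 1: "ap F p = ap F t" by (rule ap_cong) (simp add: te)
  have 2: "ap F (p(i := \<not> p i)) = ap F (t(i := \<not> t i))"
  proof (rule ap_cong)
    fix k :: nat assume k: "k < 3"
    show "(p(i := \<not> p i)) k = (t(i := \<not> t i)) k"
    proof (cases "k = i")
      case True then show ?thesis using te[OF k] by simp
    next
      case False then show ?thesis using te[OF k] by simp
    qed
  qed
  have tt: "t = trip (p 0) (p 1) (p 2)" by (simp add: t_def)
  show "dep3 F i" unfolding dep3_def using p 1 2 tt by metis
qed

lemma upd_nodep: "\<not> dep3 F i \<Longrightarrow> ap F (p(i := b)) = ap F p"
proof -
  assume n: "\<not> dep3 F i"
  then have all: "\<And>q. ap F q = ap F (q(i := \<not> q i))" unfolding dep3_iff by blast
  show ?thesis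
  proof (cases "b = p i")
    case True then show ?thesis by simp
  next
    case False then have "b = (\<not> p i)" by auto
    then show ?thesis using all[of p] by simp
  qed
qed

lemma dep_only_step:
  assumes "k < 3" "k \<in> EF F \<Longrightarrow> r k = q k"
  shows "ap F (r(k := q k)) = ap F r"
proof (cases "k \<in> EF F")
  case True then have rk: "r k = q k" using assms(2) by blast
  have "r(k := q k) = r" unfolding rk[symmetric] by (rule fun_upd_triv)
  then show ?thesis by simp
next
  case False then have "\<not> dep3 F k" using assms(1) by (simp add: EF_def)
  then show ?thesis by (rule upd_nodep)
qed

lemma dep_only:
  assumes "\<And>i. i \<in> EF F \<Longrightarrow> p i = q i"
  shows "ap F p = ap F q"
proof -
  have "ap F p = ap F (p(0 := q 0))" using dep_only_step[of 0 F p q] assms by simp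
  also have "\<dots> = ap F (p(0 := q 0, 1 := q 1))"
    using dep_only_step[of 1 F "p(0 := q 0)" q] assms by simp
  also have "\<dots> = ap F (p(0 := q 0, 1 := q 1, 2 := q 2))"
    using dep_only_step[of 2 F "p(0 := q 0, 1 := q 1)" q] assms by simp
  also have "\<dots> = ap F q" by (simp add: ap_def)
  finally show ?thesis .
qed

lemma sorted_img_mono:
  fixes g :: "'a::linorder \<Rightarrow> 'b::linorder"
  assumes fin: "finite A" and mono: "\<And>x y. x \<in> A \<Longrightarrow> y \<in> A \<Longrightarrow> x < y \<Longrightarrow> g x < g y"
  shows "sorted_list_of_set (g ` A) = map g (sorted_list_of_set A)"
proof -
  let ?L = "sorted_list_of_set A"
  have inj: "inj_on g A"
    by (rule inj_onI) (metis linorder_neq_iff mono order_less_irrefl)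
  have s: "sorted_wrt (<) ?L" by (rule strict_sorted_list_of_set)
  have "sorted_wrt (\<lambda>x y. g x < g y) ?L"
    by (rule sorted_wrt_mono_rel[OF _ s]) (use fin mono in auto)
  then have 1: "sorted_wrt (<) (map g ?L)" by (simp add: sorted_wrt_map)
  have 2: "set (map g ?L) = g ` A" using fin by simp
  have 3: "length (map g ?L) = card (g ` A)" using fin inj by (simp add: card_image)
  show ?thesis using 1 2 3 fin sorted_list_of_set_unique[of "g ` A" "map g ?L"] by simp
qed

lemma sorted_img_anti:
  fixes g :: "'a::linorder \<Rightarrow> 'b::linorder"
  assumes fin: "finite A" and mono: "\<And>x y. x \<in> A \<Longrightarrow> y \<in> A \<Longrightarrow> x < y \<Longrightarrow> g y < g x"
  shows "sorted_list_of_set (g ` A) = rev (map g (sorted_list_of_set A))"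
proof -
  let ?L = "sorted_list_of_set A"
  have inj: "inj_on g A"
    by (rule inj_onI) (metis linorder_neq_iff mono order_less_irrefl)
  have s: "sorted_wrt (<) ?L" by (rule strict_sorted_list_of_set)
  have "sorted_wrt (\<lambda>x y. g y < g x) ?L"
    by (rule sorted_wrt_mono_rel[OF _ s]) (use fin mono in auto)
  then have 1: "sorted_wrt (<) (rev (map g ?L))" by (simp add: sorted_wrt_map sorted_wrt_rev)
  have 2: "set (rev (map g ?L)) = g ` A" using fin by simp
  have 3: "length (rev (map g ?L)) = card (g ` A)" using fin inj by (simp add: card_image)
  show ?thesis using 1 2 3 fin sorted_list_of_set_unique[of "g ` A" "rev (map g ?L)"] by simp
qed

lemma nth_sorted_card:
  fixes E :: "nat set"
  assumes fin: "finite E" and i: "i \<in> E"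
  shows "sorted_list_of_set E ! card {j\<in>E. j < i} = i" and "card {j\<in>E. j < i} < card E"
proof -
  let ?L = "sorted_list_of_set E"
  have s: "sorted_wrt (<) ?L" by (rule strict_sorted_list_of_set)
  have sL: "set ?L = E" using fin by simp
  have d: "distinct ?L" by simp
  obtain k where k: "k < length ?L" "?L ! k = i" using i sL by (metis in_set_conv_nth)
  have eq: "{j\<in>E. j < i} = set (take k ?L)"
  proof (rule set_eqI, rule iffI)
    fix j assume "j \<in> {j\<in>E. j < i}"
    then have j: "j \<in> E" "j < i" by auto
    then obtain m where m: "m < length ?L" "?L ! m = j" using sL by (metis in_set_conv_nth)
    have "m < k"
    proof (rule ccontr)
      assume "\<not> m < k"
      then have "k = m \<or> k < m" by auto
      then show False
      proof
        assume "k = m" then show False using k m j by simp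
      next
        assume "k < m" then have "?L ! k < ?L ! m" using sorted_wrt_nth_less[OF s _ m(1)] by blast
        then show False using k m j by simp
      qed
    qed
    then show "j \<in> set (take k ?L)" using m k by (auto simp: in_set_conv_nth)
  next
    fix j assume "j \<in> set (take k ?L)"
    then obtain m where m: "m < k" "?L ! m = j" using k by (auto simp: in_set_conv_nth)
    then have "?L ! m < ?L ! k" using sorted_wrt_nth_less[OF s m(1) k(1)] by blast
    moreover have "j \<in> E" using m k sL by (metis nth_mem order.strict_trans)
    ultimately show "j \<in> {j\<in>E. j < i}" using m k by auto
  qed
  have c: "card {j\<in>E. j < i} = k" unfolding eq using d k
    by (simp add: distinct_card)
  show "sorted_list_of_set E ! card {j\<in>E. j < i} = i" using c k by simp
  show "card {j\<in>E. j < i} < card E" using c k fin by simp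
qed



definition loc :: "int \<Rightarrow> (bool \<Rightarrow> bool \<Rightarrow> bool \<Rightarrow> bool) \<Rightarrow> gmap" where
  "loc k F = (\<lambda>x z. F (x (z + k - 1)) (x (z + k)) (x (z + k + 1)))"

lemma loc_ap: "loc k F x z = ap F (\<lambda>i. x (z + k - 1 + int i))"
  by (simp add: loc_def ap_def algebra_simps)

lemma op_sigma_loc: "op_sigma (loc k F) = loc (k+1) F"
  by (simp add: fun_eq_iff op_sigma_def shift_def loc_def algebra_simps)
lemma op_sigma_inv_loc: "op_sigma_inv (loc k F) = loc (k-1) F"
  by (simp add: fun_eq_iff op_sigma_inv_def shift_inv_def loc_def algebra_simps)
lemma op_c_loc: "op_c (loc k F) = loc k (cT F)"
  by (simp add: fun_eq_iff op_c_def cswap_def loc_def cT_def)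
lemma op_r_loc: "op_r (loc k F) = loc (-k) (rT F)"
  by (simp add: fun_eq_iff op_r_def refl_cfg_def loc_def rT_def algebra_simps)

lemma cT_cT: "cT (cT F) = F" by (simp add: cT_def fun_eq_iff)
lemma rT_rT: "rT (rT F) = F" by (simp add: rT_def fun_eq_iff)
lemma rT_cT: "rT (cT F) = cT (rT F)" by (simp add: rT_def cT_def fun_eq_iff)
lemma cT_tr: "cT (tr a b F) = tr (\<not>a) b F" by (cases a; cases b) (simp_all add: tr_def cT_cT)
lemma rT_tr: "rT (tr a b F) = tr a (\<not>b) F" by (cases a; cases b) (simp_all add: tr_def rT_rT rT_cT)
lemma tr_tr: "tr a b (tr a1 b1 F) = tr (a \<noteq> a1) (b \<noteq> b1) F"
  by (cases a; cases b; cases a1; cases b1) (simp_all add: tr_def cT_cT rT_rT rT_cT)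

lemma sym_nf: "sym_equiv \<Phi> \<Psi> \<Longrightarrow> \<Phi> = loc k F \<Longrightarrow> \<exists>k' a b. \<Psi> = loc k' (tr a b F)"
proof (induction rule: sym_equiv.induct)
  case (base \<Phi>)
  then have "\<Phi> = loc k (tr False False F)" by (simp add: tr_def)
  then show ?case by blast
next
  case (sigma \<Phi> \<Psi>)
  then obtain k' a b where "\<Psi> = loc k' (tr a b F)" by blast
  then have "op_sigma \<Psi> = loc (k'+1) (tr a b F)" by (simp add: op_sigma_loc)
  then show ?case by blast
next
  case (sigma_inv \<Phi> \<Psi>)
  then obtain k' a b where "\<Psi> = loc k' (tr a b F)" by blast
  then have "op_sigma_inv \<Psi> = loc (k'-1) (tr a b F)" by (simp add: op_sigma_inv_loc)
  then show ?case by blast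
next
  case (c \<Phi> \<Psi>)
  then obtain k' a b where "\<Psi> = loc k' (tr a b F)" by blast
  then have "op_c \<Psi> = loc k' (tr (\<not>a) b F)" by (simp add: op_c_loc cT_tr)
  then show ?case by blast
next
  case (r \<Phi> \<Psi>)
  then obtain k' a b where "\<Psi> = loc k' (tr a b F)" by blast
  then have "op_r \<Psi> = loc (-k') (tr a (\<not>b) F)" by (simp add: op_r_loc rT_tr)
  then show ?case by blast
qed

lemma sym_up: "sym_equiv \<Phi> (loc j G) \<Longrightarrow> sym_equiv \<Phi> (loc (j + int d) G)"
proof (induction d)
  case 0 then show ?case by simp
next
  case (Suc d)
  then have "sym_equiv \<Phi> (op_sigma (loc (j + int d) G))" by (simp add: sym_equiv.sigma)
  then show ?case by (simp add: op_sigma_loc algebra_simps)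
qed

lemma sym_down: "sym_equiv \<Phi> (loc j G) \<Longrightarrow> sym_equiv \<Phi> (loc (j - int d) G)"
proof (induction d)
  case 0 then show ?case by simp
next
  case (Suc d)
  then have "sym_equiv \<Phi> (op_sigma_inv (loc (j - int d) G))" by (simp add: sym_equiv.sigma_inv)
  then show ?case by (simp add: op_sigma_inv_loc algebra_simps)
qed

lemma sym_shift: "sym_equiv \<Phi> (loc j G) \<Longrightarrow> sym_equiv \<Phi> (loc j' G)"
proof (cases "j \<le> j'")
  case True
  assume h: "sym_equiv \<Phi> (loc j G)"
  have "j' = j + int (nat (j' - j))" using True by simp
  then show ?thesis using sym_up[OF h, of "nat (j' - j)"] by simp
next
  case False
  assume h: "sym_equiv \<Phi> (loc j G)"
  have "j' = j - int (nat (j - j'))" using False by simp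
  then show ?thesis using sym_down[OF h, of "nat (j - j')"] by simp
qed

lemma sym_reach: "sym_equiv (loc k F) (loc k' (tr a b F))"
proof -
  have s1: "sym_equiv (loc k F) (loc (if b then -k else k) ((if b then rT else id) F))"
  proof (cases b)
    case True
    have "sym_equiv (loc k F) (op_r (loc k F))" by (rule sym_equiv.r[OF sym_equiv.base])
    then show ?thesis using True by (simp add: op_r_loc)
  next
    case False then show ?thesis by (simp add: sym_equiv.base)
  qed
  have s2: "sym_equiv (loc k F) (loc (if b then -k else k) (tr a b F))"
  proof (cases a)
    case True
    have "sym_equiv (loc k F) (op_c (loc (if b then -k else k) ((if b then rT else id) F)))"
      by (rule sym_equiv.c[OF s1])
    then show ?thesis using True by (simp add: op_c_loc tr_def)
  next
    case False then show ?thesis using s1 by (simp add: tr_def)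
  qed
  show ?thesis by (rule sym_shift[OF s2])
qed

lemma op_c_Phi: "op_c (Phi M f) = Phi M (\<lambda>l. \<not> f (map Not l))"
  by (simp add: fun_eq_iff op_c_def cswap_def Phi_def comp_def)

lemma op_r_Phi:
  assumes "finite M"
  shows "op_r (Phi M f) = Phi (uminus ` M) (\<lambda>l. f (rev l))"
proof -
  have s: "sorted_list_of_set (uminus ` M) = rev (map uminus (sorted_list_of_set M))"
    by (rule sorted_img_anti[OF assms]) simp
  show ?thesis
    by (simp add: fun_eq_iff op_r_def refl_cfg_def Phi_def s rev_map comp_def)
qed

lemma hfl: "(v::rat) * of_int j \<in> \<int> \<Longrightarrow> of_int \<lfloor>v * of_int j\<rfloor> = v * of_int j"
  by (metis Ints_cases floor_of_int)

lemma scale_img: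
  assumes "\<forall>j\<in>M. v * of_int j \<in> \<int>"
  shows "scale_set v M = (\<lambda>j. \<lfloor>v * of_int j\<rfloor>) ` M"
proof (rule set_eqI, rule iffI)
  fix k assume "k \<in> scale_set v M"
  then obtain j where j: "j \<in> M" "of_int k = v * of_int j" by (auto simp: scale_set_def)
  then have "k = \<lfloor>v * of_int j\<rfloor>" by (metis floor_of_int)
  then show "k \<in> (\<lambda>j. \<lfloor>v * of_int j\<rfloor>) ` M" using j by blast
next
  fix k assume "k \<in> (\<lambda>j. \<lfloor>v * of_int j\<rfloor>) ` M"
  then obtain j where j: "j \<in> M" "k = \<lfloor>v * of_int j\<rfloor>" by blast
  then have "of_int k = v * of_int j" using hfl assms by blast
  then show "k \<in> scale_set v M" using j unfolding scale_set_def by blast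
qed

lemma sorted_scale:
  assumes v: "0 < v" and fin: "finite M" and I: "\<forall>j\<in>M. v * of_int j \<in> \<int>"
  shows "sorted_list_of_set (scale_set v M) = map (\<lambda>j. \<lfloor>v * of_int j\<rfloor>) (sorted_list_of_set M)"
proof -
  have "sorted_list_of_set ((\<lambda>j. \<lfloor>v * of_int j\<rfloor>) ` M) = map (\<lambda>j. \<lfloor>v * of_int j\<rfloor>) (sorted_list_of_set M)"
  proof (rule sorted_img_mono[OF fin])
    fix x y assume xy: "x \<in> M" "y \<in> M" "x < y"
    have "v * of_int x < v * of_int y" using v xy(3) by simp
    then have "(of_int \<lfloor>v * of_int x\<rfloor> :: rat) < of_int \<lfloor>v * of_int y\<rfloor>"
      using hfl I xy by simp
    then show "\<lfloor>v * of_int x\<rfloor> < \<lfloor>v * of_int y\<rfloor>" by linarith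
  qed
  then show ?thesis using scale_img[OF I] by simp
qed

lemma finite_scale: "\<forall>j\<in>M. v * of_int j \<in> \<int> \<Longrightarrow> finite M \<Longrightarrow> finite (scale_set v M)"
  by (simp add: scale_img)

lemma scale_uminus: "scale_set v (uminus ` M) = uminus ` scale_set v M"
proof (rule set_eqI, rule iffI)
  fix k assume "k \<in> scale_set v (uminus ` M)"
  then obtain j where j: "j \<in> M" "of_int k = v * of_int (- j)" by (auto simp: scale_set_def)
  then have "of_int (-k) = v * of_int j" by simp
  then have "-k \<in> scale_set v M" using j(1) unfolding scale_set_def by blast
  then show "k \<in> uminus ` scale_set v M" by (metis image_eqI minus_minus)
next
  fix k assume "k \<in> uminus ` scale_set v M"
  then obtain k' j where j: "k = - k'" "j \<in> M" "of_int k' = v * of_int j" by (auto simp: scale_set_def)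
  then have "of_int k = v * of_int (- j)" by simp
  then show "k \<in> scale_set v (uminus ` M)" using j(2) unfolding scale_set_def by blast
qed

lemma is_scaling_c: "is_scaling v \<Phi> \<Psi> \<Longrightarrow> is_scaling v (op_c \<Phi>) (op_c \<Psi>)"
  unfolding is_scaling_def is_rep_def
  by (metis op_c_Phi)

lemma is_scaling_r:
  assumes "is_scaling v \<Phi> \<Psi>"
  shows "is_scaling v (op_r \<Phi>) (op_r \<Psi>)"
proof -
  obtain M f where v: "0 < v" and fin: "finite M" and P: "\<Phi> = Phi M f"
    and I: "\<forall>j\<in>M. v * of_int j \<in> \<int>" and Q: "\<Psi> = Phi (scale_set v M) f"
    using assms unfolding is_scaling_def is_rep_def by blast
  have fin2: "finite (scale_set v M)" using finite_scale I fin by blast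
  have 1: "op_r \<Phi> = Phi (uminus ` M) (\<lambda>l. f (rev l))" using P op_r_Phi[OF fin] by simp
  have 2: "op_r \<Psi> = Phi (scale_set v (uminus ` M)) (\<lambda>l. f (rev l))"
    using Q op_r_Phi[OF fin2] by (simp add: scale_uminus)
  have I2: "\<forall>j\<in>uminus ` M. v * of_int j \<in> \<int>" using I by (auto intro: Ints_minus)
  show ?thesis unfolding is_scaling_def is_rep_def using v fin 1 2 I2 by blast
qed



definition Qr :: "rat \<Rightarrow> int \<Rightarrow> int \<Rightarrow> nat \<Rightarrow> nat \<Rightarrow> bool" where
  "Qr v k1 k2 i i' \<longleftrightarrow> (of_int (k2 - 1 + int i') :: rat) = v * of_int (k1 - 1 + int i)"

lemma Qr_mono:
  assumes v: "0 < v" and a: "Qr v k1 k2 i i'" and b: "Qr v k1 k2 j j'"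
  shows "i < j \<longleftrightarrow> i' < j'"
proof -
  have "i < j \<longleftrightarrow> v * of_int (k1 - 1 + int i) < v * of_int (k1 - 1 + int j)" using v by simp
  also have "\<dots> \<longleftrightarrow> (of_int (k2 - 1 + int i') :: rat) < of_int (k2 - 1 + int j')"
    using a b by (simp add: Qr_def)
  also have "\<dots> \<longleftrightarrow> i' < j'" by simp
  finally show ?thesis .
qed

lemma Q_uniq1:
  fixes Q :: "nat \<Rightarrow> nat \<Rightarrow> bool"
  assumes mono: "\<And>i j i' j'. Q i i' \<Longrightarrow> Q j j' \<Longrightarrow> (i < j \<longleftrightarrow> i' < j')"
  shows "Q i i' \<Longrightarrow> Q i j' \<Longrightarrow> i' = j'"
  using mono[of i i' i j'] mono[of i j' i i'] by auto

lemma Q_uniq2: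
  fixes Q :: "nat \<Rightarrow> nat \<Rightarrow> bool"
  assumes mono: "\<And>i j i' j'. Q i i' \<Longrightarrow> Q j j' \<Longrightarrow> (i < j \<longleftrightarrow> i' < j')"
  shows "Q i i' \<Longrightarrow> Q j i' \<Longrightarrow> i = j"
  using mono[of i i' j i'] mono[of j i' i i'] by auto

lemma EF_sub: "EF F \<subseteq> {0,1,2}"
  using lt3 by (auto simp: EF_def)

lemma finite_EF: "finite (EF F)"
  by (rule finite_subset[OF EF_sub]) simp

lemma EF3: "i \<in> EF F \<Longrightarrow> i < 3"
  by (simp add: EF_def)

lemma corr:
  fixes Q :: "nat \<Rightarrow> nat \<Rightarrow> bool"
  assumes mono: "\<And>i j i' j'. Q i i' \<Longrightarrow> Q j j' \<Longrightarrow> (i < j \<longleftrightarrow> i' < j')"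
    and B: "\<And>p. ap F p = ap G (\<lambda>i'. \<exists>l<3. Q l i' \<and> p l)"
    and i: "i \<in> EF F"
  shows "\<exists>i'\<in>EF G. Q i i'"
proof -
  from i have i3: "i < 3" and d: "dep3 F i" by (auto simp: EF_def)
  obtain p where p: "ap F p \<noteq> ap F (p(i := \<not> p i))" using d dep3_iff by blast
  define T where "T = (\<lambda>q i'. \<exists>l<3. Q l i' \<and> q l)"
  have neq: "ap G (T p) \<noteq> ap G (T (p(i := \<not> p i)))"
    using p B[of p] B[of "p(i := \<not> p i)"] unfolding T_def by simp
  have ex: "\<exists>i'<3. Q i i'"
  proof (rule ccontr)
    assume nq: "\<not> (\<exists>i'<3. Q i i')"
    have "ap G (T p) = ap G (T (p(i := \<not> p i)))"
    proof (rule ap_cong)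
      fix i' :: nat assume "i' < 3"
      then have "\<And>l. Q l i' \<Longrightarrow> l \<noteq> i" using nq by blast
      then show "T p i' = T (p(i := \<not> p i)) i'" unfolding T_def by auto
    qed
    with neq show False by simp
  qed
  then obtain i' where i': "i' < 3" "Q i i'" by blast
  have eqT: "T (p(i := \<not> p i)) = (T p)(i' := \<not> T p i')"
  proof (rule ext)
    fix i'' show "T (p(i := \<not> p i)) i'' = ((T p)(i' := \<not> T p i')) i''"
    proof (cases "i'' = i'")
      case True
      have u: "l = i" if "Q l i'" for l by (rule Q_uniq2[where Q=Q, OF mono that i'(2)])
      have "T q i' = q i" for q
      proof
        assume "T q i'"
        then obtain l where l: "Q l i'" "q l" unfolding T_def by blast
        have "l = i" by (rule u[OF l(1)])
        then show "q i" using l(2) by simp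
      next
        assume "q i" then show "T q i'" unfolding T_def using i3 i'(2) by blast
      qed
      then have "T (p(i := \<not> p i)) i' = (\<not> p i)" and "T p i' = p i" by simp_all
      then show ?thesis using True by simp
    next
      case False
      have u: "l \<noteq> i" if lq: "Q l i''" for l
      proof
        assume "l = i"
        then have qq: "Q i i''" using lq by simp
        have "i'' = i'" by (rule Q_uniq1[where Q=Q, OF mono qq i'(2)])
        then show False using False by simp
      qed
      have TT: "T q i'' = T q' i''" if qq: "\<And>l. l \<noteq> i \<Longrightarrow> q l = q' l" for q q'
      proof -
        have "(Q l i'' \<and> q l) = (Q l i'' \<and> q' l)" for l
        proof (cases "Q l i''")
          case True then have "l \<noteq> i" by (rule u)
          then show ?thesis using qq by simp
        qed simp
        then show ?thesis unfolding T_def by simp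
      qed
      have "T (p(i := \<not> p i)) i'' = T p i''" by (rule TT) simp
      then show ?thesis using False by simp
    qed
  qed
  have "ap G (T p) \<noteq> ap G ((T p)(i' := \<not> T p i'))" using neq eqT by simp
  then have "dep3 G i'" using dep3_iff by blast
  then show ?thesis using i' by (auto simp: EF_def)
qed

lemma bij_card:
  fixes Q :: "nat \<Rightarrow> nat \<Rightarrow> bool" and E1 E2 :: "nat set"
  assumes mono: "\<And>i j i' j'. Q i i' \<Longrightarrow> Q j j' \<Longrightarrow> (i < j \<longleftrightarrow> i' < j')"
    and C1: "\<forall>i\<in>E1. \<exists>i'\<in>E2. Q i i'" and C2: "\<forall>i'\<in>E2. \<exists>i\<in>E1. Q i i'"
    and PP: "\<And>j j'. Q j j' \<Longrightarrow> (P j \<longleftrightarrow> P' j')"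
  shows "card {j\<in>E1. P j} = card {j'\<in>E2. P' j'}"
proof -
  define f where "f j = (SOME j'. j' \<in> E2 \<and> Q j j')" for j
  define g where "g j' = (SOME j. j \<in> E1 \<and> Q j j')" for j'
  have f: "f j \<in> E2 \<and> Q j (f j)" if "j \<in> E1" for j
    using C1 that unfolding f_def by (metis (mono_tags, lifting) someI_ex)
  have g: "g j' \<in> E1 \<and> Q (g j') j'" if "j' \<in> E2" for j'
    using C2 that unfolding g_def by (metis (mono_tags, lifting) someI_ex)
  have "bij_betw f {j\<in>E1. P j} {j'\<in>E2. P' j'}"
  proof (rule bij_betw_byWitness[where f' = g])
    show "\<forall>a\<in>{j \<in> E1. P j}. g (f a) = a"
    proof
      fix a assume "a \<in> {j \<in> E1. P j}"
      then have a: "a \<in> E1" by simp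
      have 1: "f a \<in> E2" "Q a (f a)" using f[OF a] by auto
      have 2: "Q (g (f a)) (f a)" using g[OF 1(1)] by auto
      show "g (f a) = a" by (rule Q_uniq2[where Q=Q, OF mono 2 1(2)])
    qed
    show "\<forall>a'\<in>{j' \<in> E2. P' j'}. f (g a') = a'"
    proof
      fix a assume "a \<in> {j \<in> E2. P' j}"
      then have a: "a \<in> E2" by simp
      have 1: "g a \<in> E1" "Q (g a) a" using g[OF a] by auto
      have 2: "Q (g a) (f (g a))" using f[OF 1(1)] by auto
      show "f (g a) = a" by (rule Q_uniq1[where Q=Q, OF mono 2 1(2)])
    qed
    show "f ` {j \<in> E1. P j} \<subseteq> {j' \<in> E2. P' j'}"
      using f PP by blast
    show "g ` {j' \<in> E2. P' j'} \<subseteq> {j \<in> E1. P j}"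
      using g PP by blast
  qed
  then show ?thesis by (rule bij_betw_same_card)
qed

lemma table:
  fixes Q :: "nat \<Rightarrow> nat \<Rightarrow> bool"
  assumes mono: "\<And>i j i' j'. Q i i' \<Longrightarrow> Q j j' \<Longrightarrow> (i < j \<longleftrightarrow> i' < j')"
    and A: "\<And>p. ap G p = ap F (\<lambda>i. \<exists>i'<3. Q i i' \<and> p i')"
    and C1: "\<forall>i\<in>EF F. \<exists>i'\<in>EF G. Q i i'" and C2: "\<forall>i'\<in>EF G. \<exists>i\<in>EF F. Q i i'"
  shows "ap G (pl (EF G) p) = ap F (pl (EF F) p)"
proof -
  have "ap G (pl (EF G) p) = ap F (\<lambda>i. \<exists>i'<3. Q i i' \<and> pl (EF G) p i')" by (rule A)
  also have "\<dots> = ap F (pl (EF F) p)"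
  proof (rule dep_only)
    fix i assume i: "i \<in> EF F"
    obtain i' where i': "i' \<in> EF G" "Q i i'" using C1 i by blast
    have i'3: "i' < 3" using i' EF3 by blast
    have "(\<exists>i''<3. Q i i'' \<and> pl (EF G) p i'') \<longleftrightarrow> pl (EF G) p i'"
    proof
      assume "\<exists>i''<3. Q i i'' \<and> pl (EF G) p i''"
      then obtain i'' where q: "Q i i''" and pp: "pl (EF G) p i''" by blast
      have "i'' = i'" by (rule Q_uniq1[where Q=Q, OF mono q i'(2)])
      then show "pl (EF G) p i'" using pp by simp
    next
      assume "pl (EF G) p i'" then show "\<exists>i''<3. Q i i'' \<and> pl (EF G) p i''" using i'3 i'(2) by blast
    qed
    also have "\<dots> \<longleftrightarrow> p (card {j'\<in>EF G. j' < i'})" using i' by (simp add: pl_def)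
    also have "card {j'\<in>EF G. j' < i'} = card {j\<in>EF F. j < i}"
    proof (rule sym, rule bij_card[OF mono C1 C2])
      fix j j' assume "Q j j'" then show "j < i \<longleftrightarrow> j' < i'" using mono i'(2) by blast
    qed
    finally show "(\<exists>i''<3. Q i i'' \<and> pl (EF G) p i'') = pl (EF F) p i" using i by (simp add: pl_def)
  qed
  finally show ?thesis .
qed

lemma card_lt_le: "card {j\<in>E. j < (i::nat)} \<le> i"
proof -
  have "card {j\<in>E. j < i} \<le> card {..<i}" by (rule card_mono) auto
  then show ?thesis by simp
qed

lemma set_EFL: "set (EFL F) = EF F"
  using lt3 by (auto simp: EFL_def EF_def)

lemma distinct_EFL: "distinct (EFL F)"
  by (simp add: EFL_def)

lemma length_EFL: "length (EFL F) = card (EF F)"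
  using distinct_card[OF distinct_EFL, of F] set_EFL[of F] by simp

lemma length_EFL3: "length (EFL F) < 4"
  by (simp add: EFL_def)

lemma plL_pl: "plL (EFL F) p = pl (EF F) p"
proof (rule ext)
  fix i
  have "length (filter (\<lambda>j. j < i) (EFL F)) = card (set (filter (\<lambda>j. j < i) (EFL F)))"
    using distinct_card[of "filter (\<lambda>j. j < i) (EFL F)"] distinct_EFL[of F] by simp
  also have "set (filter (\<lambda>j. j < i) (EFL F)) = {j\<in>EF F. j < i}" using set_EFL[of F] by auto
  finally show "plL (EFL F) p i = pl (EF F) p i" by (simp add: plL_def pl_def set_EFL)
qed

lemma ap_pl_tabv: "ap F (pl (EF F) p) = tabv F (EFL F) (p 0) (p 1) (p 2)"
proof -
  have "ap F (pl (EF F) p) = ap F (pl (EF F) (trip (p 0) (p 1) (p 2)))"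
  proof (rule ap_cong)
    fix i :: nat assume i: "i < 3"
    have "card {j\<in>EF F. j < i} < 3" using card_lt_le[of "EF F" i] i by simp
    then have "trip (p 0) (p 1) (p 2) (card {j\<in>EF F. j < i}) = p (card {j\<in>EF F. j < i})"
      by (rule trip_eq)
    then show "pl (EF F) p i = pl (EF F) (trip (p 0) (p 1) (p 2)) i"
      by (simp add: pl_def)
  qed
  then show ?thesis by (simp add: tabv_def plL_pl)
qed

lemma ob2: "(of_bool a + 2 * x = of_bool b + 2 * (y::nat)) \<longleftrightarrow> (a = b \<and> x = y)"
  by (cases a; cases b) (auto, presburger+)

lemma n4: "(n1::nat) < 4 \<Longrightarrow> n2 < 4 \<Longrightarrow> (n1 + 4 * e1 = n2 + 4 * e2) \<longleftrightarrow> (n1 = n2 \<and> e1 = e2)"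
  by arith

lemma invN_iff: "invN F = invN G \<longleftrightarrow>
   (card (EF F) = card (EF G) \<and> (\<forall>p. ap F (pl (EF F) p) = ap G (pl (EF G) p)))"
proof -
  have "invN F = invN G \<longleftrightarrow> (length (EFL F) = length (EFL G) \<and>
     (\<forall>a b c. tabv F (EFL F) a b c = tabv G (EFL G) a b c))"
    unfolding invN_def n4[OF length_EFL3 length_EFL3] enc3_def ob2 by (auto simp: all_bool_eq)
  also have "\<dots> \<longleftrightarrow> (card (EF F) = card (EF G) \<and> (\<forall>p. ap F (pl (EF F) p) = ap G (pl (EF G) p)))"
  proof -
    have "(\<forall>a b c. tabv F (EFL F) a b c = tabv G (EFL G) a b c) \<longleftrightarrow> (\<forall>p. ap F (pl (EF F) p) = ap G (pl (EF G) p))"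
    proof
      assume h: "\<forall>a b c. tabv F (EFL F) a b c = tabv G (EFL G) a b c"
      show "\<forall>p. ap F (pl (EF F) p) = ap G (pl (EF G) p)" using h by (simp add: ap_pl_tabv)
    next
      assume h: "\<forall>p. ap F (pl (EF F) p) = ap G (pl (EF G) p)"
      show "\<forall>a b c. tabv F (EFL F) a b c = tabv G (EFL G) a b c"
      proof (intro allI)
        fix a b c
        have "tabv F (EFL F) a b c = ap F (pl (EF F) (trip a b c))"
          using ap_pl_tabv[of F "trip a b c"] by (simp add: trip_def)
        also have "\<dots> = ap G (pl (EF G) (trip a b c))" using h by blast
        also have "\<dots> = tabv G (EFL G) a b c"
          using ap_pl_tabv[of G "trip a b c"] by (simp add: trip_def)
        finally show "tabv F (EFL F) a b c = tabv G (EFL G) a b c" .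
      qed
    qed
    then show ?thesis by (simp add: length_EFL)
  qed
  finally show ?thesis .
qed



lemma scal_AB:
  assumes S: "is_scaling v (loc k1 F) (loc k2 G)"
  shows "0 < v" and "\<And>p. ap G p = ap F (\<lambda>i. \<exists>i'<3. Qr v k1 k2 i i' \<and> p i')"
    and "\<And>p. ap F p = ap G (\<lambda>i'. \<exists>l<3. Qr v k1 k2 l i' \<and> p l)"
proof -
  obtain M f where v: "0 < v" and fin: "finite M" and P: "loc k1 F = Phi M f"
    and I: "\<forall>j\<in>M. v * of_int j \<in> \<int>" and Qs: "loc k2 G = Phi (scale_set v M) f"
    using S unfolding is_scaling_def is_rep_def by blast
  define h where "h j = \<lfloor>v * of_int j\<rfloor>" for j
  define L where "L = sorted_list_of_set M"
  have sL: "set L = M" using fin by (simp add: L_def)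
  have ss: "sorted_list_of_set (scale_set v M) = map h L" unfolding h_def L_def
    by (rule sorted_scale[OF v fin I])
  have hj: "of_int (h j) = v * of_int j" if "j \<in> M" for j using hfl I that unfolding h_def by blast
  have PhiM: "Phi M f y 0 = f (map y L)" for y by (simp add: Phi_def L_def)
  have PhiS: "Phi (scale_set v M) f x 0 = f (map (\<lambda>j. x (h j)) L)" for x by (simp add: Phi_def ss comp_def)
  show "0 < v" by (rule v)
  show "ap G p = ap F (\<lambda>i. \<exists>i'<3. Qr v k1 k2 i i' \<and> p i')" for p
  proof -
    define x where "x z = (\<exists>i'<3. z = k2 - 1 + int i' \<and> p i')" for z
    define y where "y j = (\<exists>i'<3. (of_int (k2 - 1 + int i') :: rat) = v * of_int j \<and> p i')" for j
    have "ap G p = loc k2 G x 0" unfolding loc_ap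
    proof (rule ap_cong)
      fix i :: nat assume i3: "i < 3"
      show "p i = x (0 + k2 - 1 + int i)" unfolding x_def using i3 by auto
    qed
    also have "\<dots> = f (map (\<lambda>j. x (h j)) L)" using Qs PhiS by simp
    also have "map (\<lambda>j. x (h j)) L = map y L"
    proof (rule map_cong[OF refl])
      fix j assume "j \<in> set L" then have j: "j \<in> M" using sL by simp
      have "h j = k2 - 1 + int i' \<longleftrightarrow> (of_int (k2 - 1 + int i') :: rat) = v * of_int j" for i'
        using hj[OF j] by (metis of_int_eq_iff)
      then show "x (h j) = y j" unfolding x_def y_def by simp
    qed
    also have "f (map y L) = loc k1 F y 0" using P PhiM by simp
    also have "\<dots> = ap F (\<lambda>i. \<exists>i'<3. Qr v k1 k2 i i' \<and> p i')" unfolding loc_ap y_def Qr_def by simp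
    finally show ?thesis .
  qed
  show "ap F p = ap G (\<lambda>i'. \<exists>l<3. Qr v k1 k2 l i' \<and> p l)" for p
  proof -
    define y where "y z = (\<exists>l<3. z = k1 - 1 + int l \<and> p l)" for z
    define x where "x z = (\<exists>l<3. (of_int z :: rat) = v * of_int (k1 - 1 + int l) \<and> p l)" for z
    have "ap F p = loc k1 F y 0" unfolding loc_ap
    proof (rule ap_cong)
      fix i :: nat assume i3: "i < 3"
      show "p i = y (0 + k1 - 1 + int i)" unfolding y_def using i3 by auto
    qed
    also have "\<dots> = f (map y L)" using P PhiM by simp
    also have "map y L = map (\<lambda>j. x (h j)) L"
    proof (rule map_cong[OF refl])
      fix j assume "j \<in> set L" then have j: "j \<in> M" using sL by simp
      have "(of_int (h j) :: rat) = v * of_int (k1 - 1 + int l) \<longleftrightarrow> j = k1 - 1 + int l" for l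
      proof -
        have "(of_int (h j) :: rat) = v * of_int (k1 - 1 + int l) \<longleftrightarrow> v * of_int j = v * of_int (k1 - 1 + int l)"
          using hj[OF j] by simp
        also have "\<dots> \<longleftrightarrow> (of_int j :: rat) = of_int (k1 - 1 + int l)" using v by simp
        also have "\<dots> \<longleftrightarrow> j = k1 - 1 + int l" by (rule of_int_eq_iff)
        finally show ?thesis .
      qed
      then show "y j = x (h j)" unfolding x_def y_def by auto
    qed
    also have "f (map (\<lambda>j. x (h j)) L) = loc k2 G x 0" using Qs PhiS by simp
    also have "\<dots> = ap G (\<lambda>i'. \<exists>l<3. Qr v k1 k2 l i' \<and> p l)" unfolding loc_ap x_def Qr_def by simp
    finally show ?thesis .
  qed
qed

lemma scal_inv:
  assumes S: "is_scaling v (loc k1 F) (loc k2 G)"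
  shows "invN F = invN G"
proof -
  note AB = scal_AB[OF S]
  have mono: "\<And>i j i' j'. Qr v k1 k2 i i' \<Longrightarrow> Qr v k1 k2 j j' \<Longrightarrow> (i < j \<longleftrightarrow> i' < j')"
    using Qr_mono[OF AB(1)] by blast
  have mono': "\<And>i j i' j'. (\<lambda>a b. Qr v k1 k2 b a) i i' \<Longrightarrow> (\<lambda>a b. Qr v k1 k2 b a) j j' \<Longrightarrow> (i < j \<longleftrightarrow> i' < j')"
    using Qr_mono[OF AB(1)] by simp
  have B': "\<And>p. ap G p = ap F (\<lambda>i'. \<exists>l<3. (\<lambda>a b. Qr v k1 k2 b a) l i' \<and> p l)"
    using AB(2) by simp
  have C1: "\<forall>i\<in>EF F. \<exists>i'\<in>EF G. Qr v k1 k2 i i'"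
    using corr[where Q = "Qr v k1 k2", OF mono AB(3)] by blast
  have C2': "\<forall>i'\<in>EF G. \<exists>i\<in>EF F. (\<lambda>a b. Qr v k1 k2 b a) i' i"
    using corr[where Q = "\<lambda>a b. Qr v k1 k2 b a", OF mono' B'] by blast
  then have C2: "\<forall>i'\<in>EF G. \<exists>i\<in>EF F. Qr v k1 k2 i i'" by simp
  have T: "\<And>p. ap G (pl (EF G) p) = ap F (pl (EF F) p)"
    by (rule table[where Q = "Qr v k1 k2", OF mono AB(2) C1 C2])
  have cd: "card {j\<in>EF F. True} = card {j'\<in>EF G. True}"
    by (rule bij_card[where Q = "Qr v k1 k2" and P = "\<lambda>_. True" and P' = "\<lambda>_. True", OF mono C1 C2]) auto
  show ?thesis unfolding invN_iff using cd T by simp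
qed



lemma construct:
  assumes v: "0 < v"
    and C1: "\<forall>i\<in>EF F. \<exists>i'\<in>EF G. Qr v k1 k2 i i'"
    and C2: "\<forall>i'\<in>EF G. \<exists>i\<in>EF F. Qr v k1 k2 i i'"
    and T: "\<And>p. ap G (pl (EF G) p) = ap F (pl (EF F) p)"
  shows "is_scaling v (loc k1 F) (loc k2 G)"
proof -
  define g where "g = (\<lambda>i::nat. k1 - 1 + int i)"
  define h where "h = (\<lambda>j. \<lfloor>v * of_int j\<rfloor>)"
  define L where "L = sorted_list_of_set (EF F)"
  define M where "M = g ` EF F"
  define f where "f = (\<lambda>l. ap F (pl (EF F) (\<lambda>n. l ! n)))"
  have finEF: "finite (EF F)" by (rule finite_EF)
  have finM: "finite M" unfolding M_def using finEF by simp
  have sM: "sorted_list_of_set M = map g L" unfolding M_def L_def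
    by (rule sorted_img_mono[OF finEF]) (simp add: g_def)
  have mono: "\<And>i j i' j'. Qr v k1 k2 i i' \<Longrightarrow> Qr v k1 k2 j j' \<Longrightarrow> (i < j \<longleftrightarrow> i' < j')"
    using Qr_mono[OF v] by blast
  have I: "\<forall>j\<in>M. v * of_int j \<in> \<int>"
  proof
    fix j assume "j \<in> M" then obtain i where i: "i \<in> EF F" "j = g i" unfolding M_def by blast
    obtain i' where "Qr v k1 k2 i i'" using C1 i(1) by blast
    then have "v * of_int j = of_int (k2 - 1 + int i')" using i(2) by (simp add: Qr_def g_def)
    then show "v * of_int j \<in> \<int>" by simp
  qed
  have sS: "sorted_list_of_set (scale_set v M) = map h (map g L)"
    unfolding h_def using sorted_scale[OF v finM I] sM by simp
  have nthL: "L ! card {j\<in>EF F. j < i} = i" if "i \<in> EF F" for i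
    using nth_sorted_card(1)[OF finEF that] by (simp add: L_def)
  have idxl: "card {j\<in>EF F. j < i} < length L" if "i \<in> EF F" for i
    using nth_sorted_card(2)[OF finEF that] finEF by (simp add: L_def)
  have rep: "loc k1 F = Phi M f"
  proof (rule ext, rule ext)
    fix x :: cfg and z :: int
    have "Phi M f x z = ap F (pl (EF F) (\<lambda>n. map (\<lambda>j. x (z + j)) (map g L) ! n))"
      by (simp only: Phi_def sM f_def)
    also have "\<dots> = ap F (\<lambda>i. x (z + k1 - 1 + int i))"
    proof (rule dep_only)
      fix i assume i: "i \<in> EF F"
      show "pl (EF F) (\<lambda>n. map (\<lambda>j. x (z + j)) (map g L) ! n) i = x (z + k1 - 1 + int i)"
        using i nthL[OF i] idxl[OF i] by (simp add: pl_def g_def algebra_simps)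
    qed
    also have "\<dots> = loc k1 F x z" by (simp add: loc_ap)
    finally show "loc k1 F x z = Phi M f x z" by simp
  qed
  have scl: "loc k2 G = Phi (scale_set v M) f"
  proof (rule ext, rule ext)
    fix x :: cfg and z :: int
    define p where "p = (\<lambda>n. x (z + h (g (L ! n))))"
    have "Phi (scale_set v M) f x z = ap F (pl (EF F) (\<lambda>n. map (\<lambda>j. x (z + j)) (map h (map g L)) ! n))"
      by (simp only: Phi_def sS f_def)
    also have "\<dots> = ap F (pl (EF F) p)"
    proof (rule dep_only)
      fix i assume i: "i \<in> EF F"
      show "pl (EF F) (\<lambda>n. map (\<lambda>j. x (z + j)) (map h (map g L)) ! n) i = pl (EF F) p i"
        using idxl[OF i] by (simp add: pl_def p_def)
    qed
    also have "\<dots> = ap G (pl (EF G) p)" using T by simp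
    also have "\<dots> = ap G (\<lambda>i'. x (z + k2 - 1 + int i'))"
    proof (rule dep_only)
      fix i' assume i': "i' \<in> EF G"
      obtain i where i: "i \<in> EF F" "Qr v k1 k2 i i'" using C2 i' by blast
      have cc: "card {j'\<in>EF G. j' < i'} = card {j\<in>EF F. j < i}"
      proof (rule sym, rule bij_card[where Q = "Qr v k1 k2", OF mono C1 C2])
        fix j j' assume "Qr v k1 k2 j j'" then show "j < i \<longleftrightarrow> j' < i'" using mono i(2) by blast
      qed
      have "v * of_int (g i) = of_int (k2 - 1 + int i')" using i(2) by (simp add: Qr_def g_def)
      then have hg: "h (g i) = k2 - 1 + int i'" unfolding h_def by (metis floor_of_int)
      have "pl (EF G) p i' = x (z + h (g i))" using i' cc nthL[OF i(1)] by (simp add: pl_def p_def)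
      also have "\<dots> = x (z + k2 - 1 + int i')" unfolding hg by (simp add: algebra_simps)
      finally show "pl (EF G) p i' = x (z + k2 - 1 + int i')" .
    qed
    also have "\<dots> = loc k2 G x z" by (simp add: loc_ap)
    finally show "loc k2 G x z = Phi (scale_set v M) f x z" by simp
  qed
  show ?thesis unfolding is_scaling_def is_rep_def using v finM rep I scl by blast
qed

lemma sub3: "E \<subseteq> {0,1,2::nat} \<Longrightarrow> E = {} \<or> E = {0} \<or> E = {1} \<or> E = {2} \<or> E = {0,1} \<or> E = {0,2} \<or> E = {1,2} \<or> E = {0,1,2}"
proof -
  assume "E \<subseteq> {0,1,2}"
  then have "E \<in> Pow {0,1,2}" by simp
  then show ?thesis by (simp add: Pow_insert insert_commute)
qed

lemma shapes:
  assumes "E1 \<subseteq> {0,1,2}" "E2 \<subseteq> {0,1,2}" "card E1 = card E2"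
  shows "\<exists>k1 k2 v. 0 < v \<and> (\<forall>i\<in>E1. \<exists>i'\<in>E2. Qr v k1 k2 i i') \<and> (\<forall>i'\<in>E2. \<exists>i\<in>E1. Qr v k1 k2 i i')"
proof -
  let ?k1 = "1 - int (Min E1)" and ?k2 = "1 - int (Min E2)"
  let ?v = "if card E1 = 2 then (of_nat (Max E2 - Min E2) :: rat) / of_nat (Max E1 - Min E1) else 1"
  have "0 < ?v \<and> (\<forall>i\<in>E1. \<exists>i'\<in>E2. Qr ?v ?k1 ?k2 i i') \<and> (\<forall>i'\<in>E2. \<exists>i\<in>E1. Qr ?v ?k1 ?k2 i i')"
    using sub3[OF assms(1)] sub3[OF assms(2)] assms(3)
    by (elim disjE) (simp_all add: Qr_def)
  then show ?thesis by blast
qed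



lemma min4: "min (min a b) (min c d) \<in> {a, b, c, (d::nat)}"
  by (simp add: min_def)

lemma K_tr: "K F = min (min (invN (tr False False F)) (invN (tr True False F)))
                        (min (invN (tr False True F)) (invN (tr True True F)))"
  by (simp add: K_def tr_def)

lemma K_attain: "\<exists>a b. K F = invN (tr a b F)"
proof -
  have "K F \<in> {invN (tr False False F), invN (tr True False F), invN (tr False True F), invN (tr True True F)}"
    unfolding K_tr by (rule min4)
  then show ?thesis by blast
qed

lemma scal_tr:
  assumes S: "is_scaling v (loc k1 F) (loc k2 G)"
  shows "\<exists>k1' k2'. is_scaling v (loc k1' (tr a b F)) (loc k2' (tr a b G))"
proof -
  have S1: "is_scaling v (loc (if b then -k1 else k1) ((if b then rT else id) F))
                         (loc (if b then -k2 else k2) ((if b then rT else id) G))"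
  proof (cases b)
    case True then show ?thesis using is_scaling_r[OF S] by (simp add: op_r_loc)
  next
    case False then show ?thesis using S by simp
  qed
  have "is_scaling v (loc (if b then -k1 else k1) (tr a b F)) (loc (if b then -k2 else k2) (tr a b G))"
  proof (cases a)
    case True then show ?thesis using is_scaling_c[OF S1] by (simp add: op_c_loc tr_def)
  next
    case False then show ?thesis using S1 by (simp add: tr_def)
  qed
  then show ?thesis by blast
qed

lemma xor_cancel: "((a::bool) \<noteq> a1) \<noteq> a1 = a"
  by auto

lemma sim_K: "sim (loc 0 X) (loc 0 Y) \<longleftrightarrow> K X = K Y"
proof
  assume "sim (loc 0 X) (loc 0 Y)"
  then obtain \<Phi>' \<Psi>' v where s1: "sym_equiv (loc 0 X) \<Phi>'" and s2: "sym_equiv (loc 0 Y) \<Psi>'"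
    and sc: "is_scaling v \<Phi>' \<Psi>'" unfolding sim_def by blast
  obtain k1 a1 b1 where P1: "\<Phi>' = loc k1 (tr a1 b1 X)" using sym_nf[OF s1 refl] by blast
  obtain k2 a2 b2 where P2: "\<Psi>' = loc k2 (tr a2 b2 Y)" using sym_nf[OF s2 refl] by blast
  have all: "invN (tr a b X) = invN (tr ((a \<noteq> a1) \<noteq> a2) ((b \<noteq> b1) \<noteq> b2) Y)" for a b
  proof -
    obtain k1' k2' where "is_scaling v (loc k1' (tr (a \<noteq> a1) (b \<noteq> b1) (tr a1 b1 X)))
                                       (loc k2' (tr (a \<noteq> a1) (b \<noteq> b1) (tr a2 b2 Y)))"
      using scal_tr[of v k1 "tr a1 b1 X" k2 "tr a2 b2 Y" "a \<noteq> a1" "b \<noteq> b1"] sc P1 P2 by blast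
    then have "invN (tr (a \<noteq> a1) (b \<noteq> b1) (tr a1 b1 X)) = invN (tr (a \<noteq> a1) (b \<noteq> b1) (tr a2 b2 Y))"
      by (rule scal_inv)
    then show ?thesis by (simp only: tr_tr xor_cancel)
  qed
  show "K X = K Y"
    unfolding K_tr[of X] K_tr[of Y] all
    by (cases a1; cases a2; cases b1; cases b2) (simp_all add: min.commute min.left_commute min.assoc)
next
  assume KK: "K X = K Y"
  obtain a b where ka: "K X = invN (tr a b X)" using K_attain by blast
  obtain a' b' where kb: "K Y = invN (tr a' b' Y)" using K_attain by blast
  define F where "F = tr a b X"
  define G where "G = tr a' b' Y"
  have "invN F = invN G" using ka kb KK by (simp add: F_def G_def)
  then have cd: "card (EF F) = card (EF G)" and tb: "\<And>p. ap F (pl (EF F) p) = ap G (pl (EF G) p)"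
    unfolding invN_iff by auto
  obtain k1 k2 v where v: "0 < v" and C1: "\<forall>i\<in>EF F. \<exists>i'\<in>EF G. Qr v k1 k2 i i'"
    and C2: "\<forall>i'\<in>EF G. \<exists>i\<in>EF F. Qr v k1 k2 i i'"
    using shapes[OF EF_sub EF_sub cd] by blast
  have "is_scaling v (loc k1 F) (loc k2 G)" by (rule construct[OF v C1 C2]) (simp add: tb)
  moreover have "sym_equiv (loc 0 X) (loc k1 F)" unfolding F_def by (rule sym_reach)
  moreover have "sym_equiv (loc 0 Y) (loc k2 G)" unfolding G_def by (rule sym_reach)
  ultimately show "sim (loc 0 X) (loc 0 Y)" unfolding sim_def by blast
qed

lemma sorted_m101: "sorted_list_of_set {-1, 0, 1::int} = [-1, 0, 1]"
  by simp

lemma ECA_eq: "ECA = (\<lambda>tb. loc 0 (R8L tb)) ` set all8"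
proof (rule set_eqI, rule iffI)
  fix \<Phi> assume "\<Phi> \<in> ECA"
  then obtain f where \<Phi>: "\<Phi> = Phi {-1, 0, 1} f" unfolding ECA_def by blast
  define tb where "tb = [f [False,False,False], f [False,False,True], f [False,True,False], f [False,True,True],
                         f [True,False,False], f [True,False,True], f [True,True,False], f [True,True,True]]"
  have tb8: "tb \<in> set all8" by (simp add: set_all8 tb_def)
  have R: "R8L tb a b c = f [a, b, c]" for a b c
    by (cases a; cases b; cases c) (simp_all add: tb_def R8L_def R8_def)
  have "\<Phi> = loc 0 (R8L tb)"
    unfolding \<Phi> by (simp add: fun_eq_iff Phi_def loc_def R sorted_m101)
  then show "\<Phi> \<in> (\<lambda>tb. loc 0 (R8L tb)) ` set all8" using tb8 by blast
next
  fix \<Phi> assume "\<Phi> \<in> (\<lambda>tb. loc 0 (R8L tb)) ` set all8"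
  then obtain tb where \<Phi>: "\<Phi> = loc 0 (R8L tb)" by blast
  have "loc 0 (R8L tb) = Phi {-1, 0, 1} (\<lambda>l. R8L tb (l!0) (l!1) (l!2))"
    by (simp add: fun_eq_iff Phi_def loc_def sorted_m101)
  then show "\<Phi> \<in> ECA" unfolding ECA_def \<Phi> by blast
qed

lemma len8: "length tb = 8 \<Longrightarrow> \<exists>t0 t1 t2 t3 t4 t5 t6 t7. tb = [t0,t1,t2,t3,t4,t5,t6,t7]"
  by (auto simp: length_Suc_conv numeral_eq_Suc)

lemma inj_E: "inj_on (\<lambda>tb. loc 0 (R8L tb)) (set all8)"
proof (rule inj_onI)
  fix tb tb' assume m1: "tb \<in> set all8" and m2: "tb' \<in> set all8"
    and eq: "loc 0 (R8L tb) = loc 0 (R8L tb')"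
  have R: "R8L tb a b c = R8L tb' a b c" for a b c
  proof -
    define x where "x = (\<lambda>z::int. if z = -1 then a else if z = 0 then b else c)"
    have "loc 0 (R8L tb) x 0 = loc 0 (R8L tb') x 0" using eq by simp
    then show ?thesis by (simp add: loc_def x_def)
  qed
  have l1: "length tb = 8" using m1 set_all8 by simp
  have l2: "length tb' = 8" using m2 set_all8 by simp
  obtain t0 t1 t2 t3 t4 t5 t6 t7 where a: "tb = [t0,t1,t2,t3,t4,t5,t6,t7]"
    using len8[OF l1] by (elim exE)
  obtain s0 s1 s2 s3 s4 s5 s6 s7 where b: "tb' = [s0,s1,s2,s3,s4,s5,s6,s7]"
    using len8[OF l2] by (elim exE)
  have "t0 = s0" using R[of False False False] by (simp add: a b R8L_simp R8_def)
  moreover have "t1 = s1" using R[of False False True] by (simp add: a b R8L_simp R8_def)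
  moreover have "t2 = s2" using R[of False True False] by (simp add: a b R8L_simp R8_def)
  moreover have "t3 = s3" using R[of False True True] by (simp add: a b R8L_simp R8_def)
  moreover have "t4 = s4" using R[of True False False] by (simp add: a b R8L_simp R8_def)
  moreover have "t5 = s5" using R[of True False True] by (simp add: a b R8L_simp R8_def)
  moreover have "t6 = s6" using R[of True True False] by (simp add: a b R8L_simp R8_def)
  moreover have "t7 = s7" using R[of True True True] by (simp add: a b R8L_simp R8_def)
  ultimately show "tb = tb'" using a b by simp
qed

theorem mainTheorem12:
  shows "card (ECA // {(\<Phi>, \<Psi>). \<Phi> \<in> ECA \<and> \<Psi> \<in> ECA \<and> sim \<Phi> \<Psi>}) = 81"
proof -
  define T where "T = set all8"
  define E where "E = (\<lambda>tb. loc 0 (R8L tb))"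
  define \<kappa> where "\<kappa> = (\<lambda>tb. K (R8L tb))"
  define R where "R = {(\<Phi>, \<Psi>). \<Phi> \<in> ECA \<and> \<Psi> \<in> ECA \<and> sim \<Phi> \<Psi>}"
  have ECA: "ECA = E ` T" using ECA_eq by (simp add: E_def T_def)
  have simE: "sim (E tb) (E tb') \<longleftrightarrow> \<kappa> tb = \<kappa> tb'" for tb tb'
    by (simp add: E_def \<kappa>_def sim_K)
  have cls: "R `` {E tb} = E ` {tb'\<in>T. \<kappa> tb' = \<kappa> tb}" if tb: "tb \<in> T" for tb
  proof (rule set_eqI, rule iffI)
    fix \<Psi> assume "\<Psi> \<in> R `` {E tb}"
    then have "\<Psi> \<in> ECA" "sim (E tb) \<Psi>" unfolding R_def by auto
    then obtain tb' where "tb' \<in> T" "\<Psi> = E tb'" "sim (E tb) (E tb')" unfolding ECA by blast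
    then show "\<Psi> \<in> E ` {tb'\<in>T. \<kappa> tb' = \<kappa> tb}" using simE by auto
  next
    fix \<Psi> assume "\<Psi> \<in> E ` {tb'\<in>T. \<kappa> tb' = \<kappa> tb}"
    then obtain tb' where tb': "tb' \<in> T" "\<Psi> = E tb'" "\<kappa> tb' = \<kappa> tb" by blast
    then have "sim (E tb) \<Psi>" using simE by simp
    moreover have "E tb \<in> ECA" "\<Psi> \<in> ECA" using tb tb' unfolding ECA by auto
    ultimately show "\<Psi> \<in> R `` {E tb}" unfolding R_def by auto
  qed
  have Q: "ECA // R = (\<lambda>c. E ` {tb'\<in>T. \<kappa> tb' = c}) ` (\<kappa> ` T)"
  proof -
    have "ECA // R = (\<lambda>tb. R `` {E tb}) ` T" unfolding quotient_def ECA by auto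
    also have "\<dots> = (\<lambda>tb. E ` {tb'\<in>T. \<kappa> tb' = \<kappa> tb}) ` T" using cls by (rule image_cong[OF refl])
    also have "\<dots> = (\<lambda>c. E ` {tb'\<in>T. \<kappa> tb' = c}) ` (\<kappa> ` T)" by (simp add: image_image)
    finally show ?thesis .
  qed
  have inj: "inj_on (\<lambda>c. E ` {tb'\<in>T. \<kappa> tb' = c}) (\<kappa> ` T)"
  proof (rule inj_onI)
    fix c1 c2 assume c1: "c1 \<in> \<kappa> ` T" and c2: "c2 \<in> \<kappa> ` T"
      and eq: "E ` {tb'\<in>T. \<kappa> tb' = c1} = E ` {tb'\<in>T. \<kappa> tb' = c2}"
    obtain t1 where t1: "t1 \<in> T" "c1 = \<kappa> t1" using c1 by blast
    then have "E t1 \<in> E ` {tb'\<in>T. \<kappa> tb' = c2}" using eq by blast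
    then obtain t2 where t2: "t2 \<in> T" "\<kappa> t2 = c2" "E t1 = E t2" by blast
    have "t1 = t2" using inj_E t1(1) t2(1) t2(3) unfolding inj_on_def E_def T_def by blast
    then show "c1 = c2" using t1 t2 by simp
  qed
  have "card (ECA // R) = card (\<kappa> ` T)" using Q card_image[OF inj] by simp
  also have "\<kappa> ` T = set (map \<kappa> all8)" by (simp add: T_def)
  also have "card (set (map \<kappa> all8)) = length (remdups (map \<kappa> all8))" by (rule card_set)
  also have "\<dots> = 81" using count81 by (simp add: \<kappa>_def)
  finally show ?thesis unfolding R_def .
qed


end
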